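(* Let $(\mathcal A,h,D)$ be an essentially discrete spectral triple and let $P_0$ be the orthogonal projection onto $\ker D$. For every $a\in\mathcal A$ there exist operators $\alpha_0,\beta_0\in B(h)$ with $\|\alpha_0\|=\|\beta_0\|=\|[D,a]\|$ such that \[ [P_0,a]=P_0\,\alpha_0\,|D|^{-1}+|D|^{-1}\beta_0\,P_0 . \]
   Context: A spectral triple $(\mathcal A,h,D)$ consists of a Hilbert space $h$, a densely defined self-adjoint operator $D$ on $h$, and a $*$-algebra $\mathcal A\subseteq B(h)$ such that every $a\in\mathcal A$ preserves the domain of $D$ and $[D,a]$ extends to a bounded operator on $h$. It is called essentially discrete if $\sigma(D)\setminus\{0\}$ is discrete; i.e. with $P_0$ the projection onto $\ker D$ (which may be infinite dimensional), the restriction of $D$ to $(I-P_0)h$ has compact inverse there. Convention: $D^{-1}$ and $|D|^{-1}$ denote the operators that vanish identically on $\ker D$ and are given by the usual functional calculus on $(I-P_0)h$ (so they are compact); similarly for $|D|^{-1/2}$. *)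

theory Defs
  imports "HOL-Analysis.Analysis"
begin

class chilbert = banach +
  fixes scaleC :: "complex \<Rightarrow> 'a \<Rightarrow> 'a"
    and cinner :: "'a \<Rightarrow> 'a \<Rightarrow> complex"
  assumes scaleC_of_real: "scaleC (complex_of_real r) x = scaleR r x"
    and scaleC_add_right: "scaleC c (x + y) = scaleC c x + scaleC c y"
    and scaleC_add_left: "scaleC (c + d) x = scaleC c x + scaleC d x"
    and scaleC_mult: "scaleC (c * d) x = scaleC c (scaleC d x)"
    and scaleC_one: "scaleC 1 x = x"
    and cinner_commute: "cinner x y = cnj (cinner y x)"
    and cinner_add_right: "cinner x (y + z) = cinner x y + cinner x z"
    and cinner_scaleC_right: "cinner x (scaleC c y) = c * cinner x y"
    and cinner_ge_zero: "Im (cinner x x) = 0 \<and> Re (cinner x x) \<ge> 0"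
    and norm_eq_sqrt_cinner: "norm x = sqrt (Re (cinner x x))"

definition clinear :: "('h::chilbert \<Rightarrow> 'h) \<Rightarrow> bool" where
  "clinear f \<longleftrightarrow> (\<forall>x y. f (x + y) = f x + f y) \<and> (\<forall>c x. f (scaleC c x) = scaleC c (f x))"

definition bop :: "('h::chilbert \<Rightarrow> 'h) \<Rightarrow> bool" where
  "bop f \<longleftrightarrow> clinear f \<and> (\<exists>K. \<forall>x. norm (f x) \<le> norm x * K)"

definition is_adjoint :: "('h::chilbert \<Rightarrow> 'h) \<Rightarrow> ('h \<Rightarrow> 'h) \<Rightarrow> bool" where
  "is_adjoint f g \<longleftrightarrow> (\<forall>x y. cinner (f x) y = cinner x (g y))"

definition compact_op :: "('h::chilbert \<Rightarrow> 'h) \<Rightarrow> bool" where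
  "compact_op f \<longleftrightarrow> bop f \<and> compact (closure (f ` {x. norm x \<le> 1}))"

definition star_algebra :: "('h::chilbert \<Rightarrow> 'h) set \<Rightarrow> bool" where
  "star_algebra A \<longleftrightarrow> (\<forall>a\<in>A. bop a) \<and> (\<lambda>x. 0) \<in> A \<and>
     (\<forall>a\<in>A. \<forall>b\<in>A. (\<lambda>x. a x + b x) \<in> A \<and> a \<circ> b \<in> A) \<and>
     (\<forall>a\<in>A. \<forall>c. (\<lambda>x. scaleC c (a x)) \<in> A) \<and>
     (\<forall>a\<in>A. \<exists>b\<in>A. is_adjoint a b)"

definition self_adjoint_op :: "'h::chilbert set \<Rightarrow> ('h \<Rightarrow> 'h) \<Rightarrow> bool" where
  "self_adjoint_op domD D \<longleftrightarrow>
     0 \<in> domD \<and> (\<forall>x\<in>domD. \<forall>y\<in>domD. x + y \<in> domD) \<and> (\<forall>c. \<forall>x\<in>domD. scaleC c x \<in> domD) \<and>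
     closure domD = UNIV \<and>
     (\<forall>x\<in>domD. \<forall>y\<in>domD. D (x + y) = D x + D y) \<and>
     (\<forall>c. \<forall>x\<in>domD. D (scaleC c x) = scaleC c (D x)) \<and>
     (\<forall>x\<in>domD. \<forall>y\<in>domD. cinner (D x) y = cinner x (D y)) \<and>
     (\<forall>y. (\<exists>z. \<forall>x\<in>domD. cinner (D x) y = cinner x z) \<longrightarrow> y \<in> domD)"

definition spectral_triple :: "('h::chilbert \<Rightarrow> 'h) set \<Rightarrow> 'h set \<Rightarrow> ('h \<Rightarrow> 'h) \<Rightarrow> bool" where
  "spectral_triple A domD D \<longleftrightarrow> star_algebra A \<and> self_adjoint_op domD D \<and>
     (\<forall>a\<in>A. a ` domD \<subseteq> domD \<and>
        (\<exists>C. bop C \<and> (\<forall>x\<in>domD. C x = D (a x) - a (D x))))"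

definition ker_op :: "'h::chilbert set \<Rightarrow> ('h \<Rightarrow> 'h) \<Rightarrow> 'h set" where
  "ker_op domD D = {x\<in>domD. D x = 0}"

definition orth_proj_onto :: "('h::chilbert \<Rightarrow> 'h) \<Rightarrow> 'h set \<Rightarrow> bool" where
  "orth_proj_onto P S \<longleftrightarrow> bop P \<and> (\<forall>x. P x \<in> S) \<and> (\<forall>x. \<forall>s\<in>S. cinner s (x - P x) = 0)"

text \<open>T is D^{-1} in the paper's convention: zero on ker D, inverse of D on (I-P0)h.\<close>
definition is_Dinv :: "'h::chilbert set \<Rightarrow> ('h \<Rightarrow> 'h) \<Rightarrow> ('h \<Rightarrow> 'h) \<Rightarrow> ('h \<Rightarrow> 'h) \<Rightarrow> bool" where
  "is_Dinv domD D P0 T \<longleftrightarrow> bop T \<and> (\<forall>x. T (P0 x) = 0) \<and>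
     (\<forall>y. T y \<in> domD \<and> D (T y) = y - P0 y) \<and> (\<forall>x\<in>domD. T (D x) = x - P0 x)"

definition essentially_discrete :: "'h::chilbert set \<Rightarrow> ('h \<Rightarrow> 'h) \<Rightarrow> bool" where
  "essentially_discrete domD D \<longleftrightarrow>
     (\<exists>P0 T. orth_proj_onto P0 (ker_op domD D) \<and> is_Dinv domD D P0 T \<and> compact_op T)"

definition positive_op :: "('h::chilbert \<Rightarrow> 'h) \<Rightarrow> bool" where
  "positive_op R \<longleftrightarrow> bop R \<and> (\<forall>x. Im (cinner x (R x)) = 0 \<and> Re (cinner x (R x)) \<ge> 0)"

text \<open>R is |D|^{-1}: the (unique) positive square root of (D^{-1})^2, i.e. the functional
calculus of lambda |-> 1/|lambda| (0 at 0).\<close>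
definition is_absDinv :: "'h::chilbert set \<Rightarrow> ('h \<Rightarrow> 'h) \<Rightarrow> ('h \<Rightarrow> 'h) \<Rightarrow> ('h \<Rightarrow> 'h) \<Rightarrow> bool" where
  "is_absDinv domD D P0 R \<longleftrightarrow> (\<exists>T. is_Dinv domD D P0 T \<and> positive_op R \<and> R \<circ> R = T \<circ> T)"

end

theory Submission
  imports Defs
begin

lemma scaleC_zero_left [simp]: "scaleC 0 (x::'h::chilbert) = 0"
  using scaleC_of_real[of 0 x] by simp

lemma scaleC_zero_right [simp]: "scaleC c (0::'h::chilbert) = 0"
proof -
  have "scaleC c (0::'h) = scaleC c 0 + scaleC c 0" using scaleC_add_right[of c 0 0] by simp
  then show ?thesis by simp
qed

lemma scaleC_minus_left: "scaleC (- c) (x::'h::chilbert) = - scaleC c x"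
proof -
  have "scaleC (c + - c) x = scaleC c x + scaleC (-c) x" by (rule scaleC_add_left)
  then show ?thesis by (simp add: eq_neg_iff_add_eq_0 add.commute)
qed

lemma scaleC_minus_right: "scaleC c (- (x::'h::chilbert)) = - scaleC c x"
proof -
  have "scaleC c (x + - x) = scaleC c x + scaleC c (-x)" by (rule scaleC_add_right)
  then show ?thesis by (simp add: eq_neg_iff_add_eq_0 add.commute)
qed

lemma scaleC_diff_right: "scaleC c ((x::'h::chilbert) - y) = scaleC c x - scaleC c y"
  using scaleC_add_right[of c x "-y"] scaleC_minus_right[of c y] by simp

lemma scaleC_scaleR: "scaleC c (scaleR r (x::'h::chilbert)) = scaleR r (scaleC c x)"
  by (metis scaleC_mult scaleC_of_real mult.commute)

lemma cinner_add_left: "cinner ((x::'h::chilbert) + y) z = cinner x z + cinner y z"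
  by (metis cinner_commute cinner_add_right complex_cnj_add)

lemma cinner_zero_right [simp]: "cinner (x::'h::chilbert) 0 = 0"
  using cinner_add_right[of x 0 0] by simp

lemma cinner_zero_left [simp]: "cinner 0 (x::'h::chilbert) = 0"
  by (metis cinner_commute cinner_zero_right complex_cnj_zero)

lemma cinner_minus_right: "cinner (x::'h::chilbert) (- y) = - cinner x y"
  using cinner_add_right[of x y "-y"] by (simp add: eq_neg_iff_add_eq_0 add.commute)

lemma cinner_diff_right: "cinner (x::'h::chilbert) (y - z) = cinner x y - cinner x z"
  using cinner_add_right[of x y "-z"] cinner_minus_right[of x z] by simp

lemma cinner_diff_left: "cinner ((x::'h::chilbert) - y) z = cinner x z - cinner y z"
  by (metis cinner_commute cinner_diff_right complex_cnj_diff)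

lemma cinner_scaleC_left: "cinner (scaleC c (x::'h::chilbert)) y = cnj c * cinner x y"
  by (metis cinner_commute cinner_scaleC_right complex_cnj_mult)

lemma cinner_self: "cinner (x::'h::chilbert) x = complex_of_real ((norm x)^2)"
proof -
  have "Im (cinner x x) = 0" "Re (cinner x x) \<ge> 0" using cinner_ge_zero by auto
  then show ?thesis using norm_eq_sqrt_cinner[of x] by (simp add: complex_eq_iff)
qed

lemma cinner_self_zero: "cinner (x::'h::chilbert) x = 0 \<longleftrightarrow> x = 0"
  using cinner_self[of x] by simp

lemma norm_scaleC: "norm (scaleC c (x::'h::chilbert)) = cmod c * norm x"
proof -
  have "cinner (scaleC c x) (scaleC c x) = cnj c * c * cinner x x"
    by (simp add: cinner_scaleC_left cinner_scaleC_right)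
  also have "cnj c * c = complex_of_real ((cmod c)^2)" using complex_norm_square[of c] by (simp add: mult.commute)
  finally have "complex_of_real ((norm (scaleC c x))^2) = complex_of_real ((cmod c * norm x)^2)"
    unfolding cinner_self by (simp only: of_real_mult[symmetric] power_mult_distrib)
  then have "(norm (scaleC c x))^2 = (cmod c * norm x)^2" by (simp only: of_real_eq_iff)
  then show ?thesis by (simp add: power2_eq_iff_nonneg)
qed

lemma pythag: assumes "cinner (u::'h::chilbert) v = 0"
  shows "(norm (u + v))^2 = (norm u)^2 + (norm v)^2"
proof -
  have "cinner v u = 0" using assms cinner_commute[of v u] by simp
  then have "cinner (u+v) (u+v) = cinner u u + cinner v v"
    using assms by (simp add: cinner_add_left cinner_add_right)
  then have "complex_of_real ((norm (u + v))^2) = complex_of_real ((norm u)^2 + (norm v)^2)"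
    by (simp only: cinner_self of_real_add)
  then show ?thesis by (simp only: of_real_eq_iff)
qed

lemma clinear_zero: "clinear f \<Longrightarrow> f 0 = 0"
  unfolding clinear_def by (metis add_cancel_right_right add_0)

lemma clinear_add: "clinear f \<Longrightarrow> f (x + y) = f x + f y"
  unfolding clinear_def by blast

lemma clinear_scaleC: "clinear f \<Longrightarrow> f (scaleC c x) = scaleC c (f x)"
  unfolding clinear_def by blast

lemma clinear_minus: "clinear f \<Longrightarrow> f (- x) = - f x"
  by (metis clinear_add clinear_zero add.right_inverse eq_neg_iff_add_eq_0)

lemma clinear_diff: "clinear f \<Longrightarrow> f (x - y) = f x - f y"
  by (metis clinear_add clinear_minus diff_conv_add_uminus)

lemma bop_clinear: "bop f \<Longrightarrow> clinear f"
  unfolding bop_def by blast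

lemma bop_bounded_linear: assumes "bop (f::'h::chilbert \<Rightarrow> 'h)" shows "bounded_linear f"
proof -
  have cl: "clinear f" using assms by (simp add: bop_def)
  obtain K where K: "\<forall>x. norm (f x) \<le> norm x * K" using assms by (auto simp: bop_def)
  show ?thesis
  proof (rule bounded_linear_intro)
    show "f (x + y) = f x + f y" for x y using cl by (rule clinear_add)
    show "f (scaleR r x) = scaleR r (f x)" for r x
      using clinear_scaleC[OF cl, of "complex_of_real r" x] by (simp add: scaleC_of_real)
    show "norm (f x) \<le> norm x * K" for x using K by blast
  qed
qed

lemma bop_cont: "bop f \<Longrightarrow> continuous_on S f"
  using bop_bounded_linear linear_continuous_on by blast

lemma bop_tendsto: "bop f \<Longrightarrow> (g \<longlongrightarrow> l) F \<Longrightarrow> ((\<lambda>n. f (g n)) \<longlongrightarrow> f l) F"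
  using bop_bounded_linear bounded_linear.tendsto by blast

lemma bop_onorm: "bop f \<Longrightarrow> norm (f x) \<le> onorm f * norm x"
  using bop_bounded_linear onorm by blast

lemma scaleC_commute: "scaleC c (scaleC d (x::'h::chilbert)) = scaleC d (scaleC c x)"
  by (metis scaleC_mult mult.commute)

lemma scaleC_bop: "bop (scaleC c :: 'h::chilbert \<Rightarrow> 'h)"
  unfolding bop_def clinear_def
  by (auto simp: scaleC_add_right norm_scaleC mult.commute scaleC_commute intro!: exI[of _ "cmod c"])

definition oproj :: "('h::chilbert \<Rightarrow> 'h) \<Rightarrow> bool" where
  "oproj Q \<longleftrightarrow> bop Q \<and> (\<forall>x. Q (Q x) = Q x) \<and> (\<forall>x y. cinner (Q x) y = cinner x (Q y))"

lemma orth_proj_props: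
  fixes P :: "'h::chilbert \<Rightarrow> 'h"
  assumes P: "orth_proj_onto P S" and sub0: "\<forall>s\<in>S. \<forall>t\<in>S. s - t \<in> S"
  shows "oproj P" and "\<And>w. (\<forall>s\<in>S. cinner s w = 0) \<Longrightarrow> P w = 0"
    and "\<And>s. s \<in> S \<Longrightarrow> P s = s"
proof -
  have sub: "s - t \<in> S" if "s \<in> S" "t \<in> S" for s t using sub0 that by blast
  have inS: "P x \<in> S" for x using P by (simp add: orth_proj_onto_def)
  have orth: "cinner s (x - P x) = 0" if "s \<in> S" for s x using P that by (simp add: orth_proj_onto_def)
  have bopP: "bop P" using P by (simp add: orth_proj_onto_def)
  show fixS: "P s = s" if "s \<in> S" for s
  proof -
    have "s - P s \<in> S" using sub[OF that inS] .
    then have "cinner (s - P s) (s - P s) = 0" using orth by blast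
    then show ?thesis unfolding cinner_self_zero by simp
  qed
  show "P w = 0" if "\<forall>s\<in>S. cinner s w = 0" for w
  proof -
    have "cinner (P w) (P w) = cinner (P w) w - cinner (P w) (w - P w)"
      by (simp add: cinner_diff_right)
    also have "\<dots> = 0" using that inS orth by simp
    finally show ?thesis unfolding cinner_self_zero .
  qed
  have sa: "cinner (P x) y = cinner x (P y)" for x y
  proof -
    have "cinner (P x) y = cinner (P x) (P y)"
      using orth[OF inS[of x], of y] by (simp add: cinner_diff_right)
    moreover have "cinner x (P y) = cinner (P x) (P y)"
      using orth[OF inS[of y], of x] cinner_commute[of "P y" "x - P x"]
      by (simp add: cinner_diff_left cinner_diff_right)
    ultimately show ?thesis by simp
  qed
  show "oproj P" unfolding oproj_def using bopP fixS inS sa by blast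
qed

lemma oproj_bop: "oproj Q \<Longrightarrow> bop Q" by (simp add: oproj_def)
lemma oproj_idem: "oproj Q \<Longrightarrow> Q (Q x) = Q x" by (simp add: oproj_def)
lemma oproj_sa: "oproj Q \<Longrightarrow> cinner (Q x) y = cinner x (Q y)" by (simp add: oproj_def)
lemma oproj_clinear: "oproj Q \<Longrightarrow> clinear Q" by (simp add: oproj_def bop_def)

lemma oproj_orth: assumes "oproj Q" shows "cinner (Q a) (b - Q b) = 0"
  using assms by (simp add: oproj_sa[OF assms, of a] cinner_diff_right clinear_diff[OF oproj_clinear[OF assms]] oproj_idem[OF assms])

lemma oproj_comp: assumes "oproj (Q::'h::chilbert \<Rightarrow> 'h)" shows "oproj (\<lambda>x. x - Q x)"
proof -
  have cl: "clinear Q" using assms oproj_clinear by blast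
  have "bop (\<lambda>x. x - Q x)"
  proof -
    obtain K where K: "\<forall>x. norm (Q x) \<le> norm x * K" using assms by (auto simp: oproj_def bop_def)
    have "clinear (\<lambda>x. x - Q x)" unfolding clinear_def
      using cl by (auto simp: clinear_add clinear_scaleC scaleC_diff_right)
    moreover have "norm (x - Q x) \<le> norm x * (1 + K)" for x
      using norm_triangle_ineq4[of x "Q x"] K[rule_format, of x] by (simp add: algebra_simps)
    ultimately show ?thesis unfolding bop_def by blast
  qed
  moreover have "(x - Q x) - Q (x - Q x) = x - Q x" for x
    by (simp add: clinear_diff[OF cl] oproj_idem[OF assms])
  moreover have "cinner (x - Q x) y = cinner x (y - Q y)" for x y
    by (simp add: cinner_diff_left cinner_diff_right oproj_sa[OF assms])
  ultimately show ?thesis unfolding oproj_def by blast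
qed

lemma oproj_pythag: assumes "oproj Q" shows "(norm y)^2 = (norm (Q y))^2 + (norm (y - Q y))^2"
  using pythag[OF oproj_orth[OF assms, of y y]] by simp

lemma oproj_norm_le: assumes "oproj Q" shows "norm (Q y) \<le> norm y" "norm (y - Q y) \<le> norm y"
  using oproj_pythag[OF assms, of y]
  by (smt (verit) norm_ge_zero power2_le_imp_le zero_le_power2)+

lemma cs_unit: assumes "norm (e::'h::chilbert) = 1" shows "cmod (cinner e w) \<le> norm w"
proof -
  define k where "k = cinner e w"
  have ee: "cinner e e = 1" using assms cinner_self[of e] by simp
  have "cinner (scaleC k e) (w - scaleC k e) = cnj k * (cinner e w - k * cinner e e)"
    by (simp only: cinner_diff_right cinner_scaleC_left cinner_scaleC_right right_diff_distrib mult.left_commute)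
  also have "\<dots> = 0" using ee k_def by simp
  finally have "(norm (scaleC k e + (w - scaleC k e)))^2 = (norm (scaleC k e))^2 + (norm (w - scaleC k e))^2"
    by (rule pythag)
  then have "(norm w)^2 = (cmod k)^2 + (norm (w - scaleC k e))^2"
    using assms by (simp add: norm_scaleC)
  then have "(cmod k)^2 \<le> (norm w)^2" by simp
  then show ?thesis unfolding k_def by (rule power2_le_imp_le) simp
qed

lemma block:
  fixes Q X :: "'h::chilbert \<Rightarrow> 'h" and e f :: 'h
  assumes Q: "oproj Q" and X: "bop X" and Xb: "\<And>y. norm (X y) \<le> c * norm y" and c: "c \<ge> 0"
    and QX: "\<And>y. Q (X y) = X y" and XQ: "\<And>y. X (Q y) = 0"
    and e: "Q e = e" "norm e = 1" and f: "Q f = 0" "norm f = 1"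
  shows "bop (\<lambda>y. X y + scaleC (complex_of_real c * cinner e y) f)"
    and "onorm (\<lambda>y. X y + scaleC (complex_of_real c * cinner e y) f) = c"
proof -
  define \<alpha> where "\<alpha> = (\<lambda>y. X y + scaleC (complex_of_real c * cinner e y) f)"
  have clX: "clinear X" using X bop_clinear by blast
  have clQ: "clinear Q" using Q oproj_clinear by blast
  have bound: "norm (\<alpha> y) \<le> c * norm y" for y
  proof -
    define k where "k = complex_of_real c * cinner e y"
    have "cinner (X y) (scaleC k f) = cinner (X y) (Q (scaleC k f))"
      using oproj_sa[OF Q, of "X y" "scaleC k f"] QX[of y] by simp
    also have "\<dots> = 0" by (simp add: clinear_scaleC[OF clQ] f)
    finally have "(norm (\<alpha> y))^2 = (norm (X y))^2 + (norm (scaleC k f))^2"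
      unfolding \<alpha>_def k_def[symmetric] by (rule pythag)
    moreover have "norm (X y) \<le> c * norm (y - Q y)"
    proof -
      have "X y = X (y - Q y)" by (simp add: clinear_diff[OF clX] XQ)
      then show ?thesis using Xb[of "y - Q y"] by (simp only:)
    qed
    moreover have "norm (scaleC k f) \<le> c * norm (Q y)"
    proof -
      have "cinner e y = cinner e (Q y)" using oproj_sa[OF Q, of e y] e(1) by simp
      then have "cmod (cinner e y) \<le> norm (Q y)" using cs_unit[OF e(2), of "Q y"] by (simp only:)
      then show ?thesis using c f(2) by (simp add: norm_scaleC k_def norm_mult mult_left_mono)
    qed
    ultimately have "(norm (\<alpha> y))^2 \<le> (c * norm (y - Q y))^2 + (c * norm (Q y))^2"
      using power_mono[OF \<open>norm (X y) \<le> c * norm (y - Q y)\<close> norm_ge_zero, of 2]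
        power_mono[OF \<open>norm (scaleC k f) \<le> c * norm (Q y)\<close> norm_ge_zero, of 2] by linarith
    also have "\<dots> = (c * norm y)^2"
      using oproj_pythag[OF Q, of y] by (simp only: power_mult_distrib distrib_left[symmetric] add.commute)
    finally show ?thesis by (rule power2_le_imp_le) (use c in simp)
  qed
  have cl: "clinear \<alpha>" unfolding clinear_def \<alpha>_def
  proof (intro conjI allI)
    fix y1 y2
    show "X (y1 + y2) + scaleC (complex_of_real c * cinner e (y1 + y2)) f =
      X y1 + scaleC (complex_of_real c * cinner e y1) f + (X y2 + scaleC (complex_of_real c * cinner e y2) f)"
      by (simp only: clinear_add[OF clX] cinner_add_right distrib_left scaleC_add_left ac_simps)
  next
    fix d y
    have "scaleC (complex_of_real c * cinner e (scaleC d y)) f = scaleC d (scaleC (complex_of_real c * cinner e y) f)"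
      by (simp only: cinner_scaleC_right scaleC_mult[symmetric] mult.left_commute)
    then show "X (scaleC d y) + scaleC (complex_of_real c * cinner e (scaleC d y)) f =
      scaleC d (X y + scaleC (complex_of_real c * cinner e y) f)"
      by (simp only: clinear_scaleC[OF clX] scaleC_add_right)
  qed
  have "\<forall>y. norm (\<alpha> y) \<le> norm y * c" using bound by (simp add: mult.commute)
  then show "bop \<alpha>" unfolding bop_def using cl by blast
  show "onorm \<alpha> = c"
  proof (rule antisym)
    show "onorm \<alpha> \<le> c" using bound c by (simp add: onorm_bound)
    have ee: "cinner e e = 1" using e(2) cinner_self[of e] by simp
    have "\<alpha> e = scaleC (complex_of_real c) f" unfolding \<alpha>_def using XQ[of e] e(1) ee by simp
    then have "norm (\<alpha> e) = c" using c f(2) by (simp add: norm_scaleC)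
    moreover have "norm (\<alpha> e) \<le> onorm \<alpha> * norm e" using bop_onorm[OF \<open>bop \<alpha>\<close>] .
    ultimately show "c \<le> onorm \<alpha>" using e(2) by simp
  qed
qed

lemma extend:
  fixes X Y P :: "'h::chilbert \<Rightarrow> 'h"
  assumes P: "oproj P" and X: "bop X" and Y: "bop Y" and nrm: "\<And>x. norm (X x) = norm (Y x)"
    and PX: "\<And>x. P (X x) = 0" and PY: "\<And>x. P (Y x) = 0"
    and dense: "\<And>y. y - P y \<in> closure (range X)"
  shows "\<exists>Z. bop Z \<and> (\<forall>y. norm (Z y) \<le> norm y) \<and> (\<forall>x. Z (X x) = Y x) \<and> (\<forall>y. Z (P y) = 0)
            \<and> (\<forall>y. P (Z y) = 0)"
proof -
  have blX: "bounded_linear X" and blY: "bounded_linear Y" and blP: "bounded_linear P"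
    using X Y P bop_bounded_linear oproj_bop by blast+
  have clX: "clinear X" and clY: "clinear Y" and clP: "clinear P"
    using X Y P bop_clinear oproj_bop by blast+
  define S where "S = range (\<lambda>x. (X x, Y x))"
  define G where "G = closure S"
  have SG: "S \<subseteq> G" unfolding G_def by (rule closure_subset)
  have G_norm: "norm (snd p) = norm (fst p)" if "p \<in> G" for p
  proof -
    have "G \<subseteq> {p. norm (snd p) = norm (fst p)}" unfolding G_def
      by (rule closure_minimal) (auto simp: S_def nrm intro!: closed_Collect_eq continuous_intros)
    then show ?thesis using that by blast
  qed
  have G_P: "P (snd p) = 0" if "p \<in> G" for p
  proof -
    have bl: "bounded_linear (\<lambda>p. P (snd p))"
      by (rule bounded_linear_compose[OF blP bounded_linear_snd])
    have "G \<subseteq> {p. P (snd p) = 0}" unfolding G_def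
      by (rule closure_minimal) (auto simp: S_def PY intro!: closed_Collect_eq continuous_intros linear_continuous_on bl)
    then show ?thesis using that by blast
  qed
  have G_add: "p + q \<in> G" if "p \<in> G" "q \<in> G" for p q
  proof -
    have "(\<lambda>r. fst r + snd r) ` closure (S \<times> S) \<subseteq> closure S"
    proof (rule image_closure_subset)
      show "continuous_on (closure (S \<times> S)) (\<lambda>r. fst r + snd r)"
        by (intro continuous_intros)
      show "closed (closure S)" by simp
      have "(X a, Y a) + (X b, Y b) \<in> S" for a b
        unfolding S_def by (auto simp: clinear_add[OF clX, symmetric] clinear_add[OF clY, symmetric])
      then show "(\<lambda>r. fst r + snd r) ` (S \<times> S) \<subseteq> closure S"
        using closure_subset unfolding S_def by fastforce
    qed
    moreover have "(p, q) \<in> closure (S \<times> S)" using that by (simp add: closure_Times G_def)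
    ultimately show ?thesis unfolding G_def by force
  qed
  have G_scale: "(scaleC c (fst p), scaleC c (snd p)) \<in> G" if "p \<in> G" for p c
  proof -
    have blc: "bounded_linear (scaleC c :: 'h \<Rightarrow> 'h)" using scaleC_bop bop_bounded_linear by blast
    have "(\<lambda>r. (scaleC c (fst r), scaleC c (snd r))) ` closure S \<subseteq> closure S"
    proof (rule image_closure_subset)
      show "continuous_on (closure S) (\<lambda>r. (scaleC c (fst r), scaleC c (snd r)))"
        by (intro continuous_intros continuous_on_compose2[OF linear_continuous_on[OF blc]]) auto
      show "closed (closure S)" by simp
      have "(scaleC c (X a), scaleC c (Y a)) \<in> S" for a
        unfolding S_def by (auto simp: clinear_scaleC[OF clX, symmetric] clinear_scaleC[OF clY, symmetric])
      then show "(\<lambda>r. (scaleC c (fst r), scaleC c (snd r))) ` S \<subseteq> closure S"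
        using closure_subset unfolding S_def by fastforce
    qed
    then show ?thesis using that unfolding G_def by force
  qed
  have G_uniq: "v = v'" if "(u, v) \<in> G" "(u, v') \<in> G" for u v v'
  proof -
    have "(scaleC (-1) u, scaleC (-1) v') \<in> G" using G_scale[OF that(2)] by simp
    then have "(u, v) + (scaleC (-1) u, scaleC (-1) v') \<in> G" using G_add that(1) by blast
    then have "(0, v - v') \<in> G" by (simp add: scaleC_minus_left scaleC_one)
    from G_norm[OF this] show ?thesis by simp
  qed
  have G_ex: "\<exists>v. (u, v) \<in> G" if "u \<in> closure (range X)" for u
  proof -
    from that obtain s where s: "\<forall>n. s n \<in> range X" "s \<longlonglongrightarrow> u"
      unfolding closure_sequential by blast
    have "\<forall>n. \<exists>z. s n = X z" using s(1) by blast
    then obtain w where w: "\<forall>n. s n = X (w n)" unfolding choice_iff by blast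
    have sX: "s = (\<lambda>n. X (w n))" using w by (intro ext) simp
    have cX: "Cauchy (\<lambda>n. X (w n))" using LIMSEQ_imp_Cauchy[OF s(2)] sX by simp
    have "Cauchy (\<lambda>n. Y (w n))"
    proof (rule CauchyI)
      fix e :: real assume "0 < e"
      from CauchyD[OF cX this] obtain M where M: "\<forall>m\<ge>M. \<forall>n\<ge>M. norm (X (w m) - X (w n)) < e" by blast
      have "norm (Y (w m) - Y (w n)) = norm (X (w m) - X (w n))" for m n
        using nrm[of "w m - w n"] by (simp only: clinear_diff[OF clX] clinear_diff[OF clY])
      then show "\<exists>M. \<forall>m\<ge>M. \<forall>n\<ge>M. norm (Y (w m) - Y (w n)) < e" using M by auto
    qed
    then have "convergent (\<lambda>n. Y (w n))" by (simp only: Cauchy_convergent_iff)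
    then obtain v where v: "(\<lambda>n. Y (w n)) \<longlonglongrightarrow> v" unfolding convergent_def by blast
    have t: "(\<lambda>n. (X (w n), Y (w n))) \<longlonglongrightarrow> (u, v)"
      by (rule tendsto_Pair) (use s(2) sX v in simp_all)
    have inS: "\<forall>n. (\<lambda>n. (X (w n), Y (w n))) n \<in> S" unfolding S_def by auto
    have "\<exists>x. (\<forall>n. x n \<in> S) \<and> x \<longlonglongrightarrow> (u, v)" by (rule exI, rule conjI, rule inS, rule t)
    then have "(u, v) \<in> G" unfolding G_def closure_sequential .
    then show ?thesis by blast
  qed
  define Z where "Z y = (THE v. (y - P y, v) \<in> G)" for y
  have ZG: "(y - P y, Z y) \<in> G" for y
  proof -
    obtain v where v: "(y - P y, v) \<in> G" using G_ex dense by blast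
    have "\<And>x. (y - P y, x) \<in> G \<Longrightarrow> x = v" using v G_uniq by blast
    with v show ?thesis unfolding Z_def by (rule theI)
  qed
  have Zeq: "Z y = v" if "(y - P y, v) \<in> G" for y v using G_uniq[OF ZG that] .
  have cl: "clinear Z" unfolding clinear_def
  proof (intro conjI allI)
    fix y1 y2
    have "(y1 - P y1, Z y1) + (y2 - P y2, Z y2) \<in> G" using G_add ZG by blast
    then show "Z (y1 + y2) = Z y1 + Z y2"
      by (intro Zeq) (simp add: clinear_add[OF clP] algebra_simps)
  next
    fix c y
    have "(scaleC c (y - P y), scaleC c (Z y)) \<in> G" using G_scale[OF ZG] by simp
    then show "Z (scaleC c y) = scaleC c (Z y)"
      by (intro Zeq) (simp add: clinear_scaleC[OF clP] scaleC_diff_right)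
  qed
  have Znorm: "norm (Z y) \<le> norm y" for y
    using G_norm[OF ZG[of y]] oproj_norm_le(2)[OF P, of y] by simp
  have "bop Z" unfolding bop_def using cl Znorm by (intro conjI exI[of _ 1]) simp_all
  moreover have "Z (X x) = Y x" for x
    by (rule Zeq) (use SG in \<open>auto simp: PX S_def\<close>)
  moreover have "Z (P y) = 0" for y
  proof (rule Zeq)
    have "(X 0, Y 0) \<in> G" using SG S_def by auto
    then show "(P y - P (P y), 0) \<in> G" by (simp add: oproj_idem[OF P] clinear_zero[OF clX] clinear_zero[OF clY])
  qed
  moreover have "P (Z y) = 0" for y using G_P[OF ZG[of y]] by simp
  ultimately show ?thesis using Znorm by blast
qed

lemma bop_comp: assumes "bop (f::'h::chilbert \<Rightarrow> 'h)" "bop g" shows "bop (\<lambda>x. f (g x))"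
proof -
  obtain K1 where K1: "\<forall>x. norm (f x) \<le> norm x * K1" using assms(1) by (auto simp: bop_def)
  obtain K2 where K2: "\<forall>x. norm (g x) \<le> norm x * K2" using assms(2) by (auto simp: bop_def)
  have K1': "norm (f x) \<le> norm x * max K1 0" for x
    using K1[rule_format, of x] by (smt (verit) mult_left_mono norm_ge_zero)
  have "norm (f (g x)) \<le> norm x * (K2 * max K1 0)" for x
  proof -
    have "norm (f (g x)) \<le> norm (g x) * max K1 0" using K1' by blast
    also have "\<dots> \<le> (norm x * K2) * max K1 0" using K2 by (simp add: mult_right_mono)
    finally show ?thesis by (simp add: mult.assoc)
  qed
  moreover have "clinear (\<lambda>x. f (g x))" using assms unfolding bop_def clinear_def by simp
  ultimately show ?thesis unfolding bop_def by blast
qed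

lemma bop_uminus: assumes "bop (f::'h::chilbert \<Rightarrow> 'h)" shows "bop (\<lambda>x. - f x)"
  using assms unfolding bop_def clinear_def by (auto simp: scaleC_minus_right)

lemma positive_sa: assumes "positive_op (R::'h::chilbert \<Rightarrow> 'h)"
  shows "cinner (R x) y = cinner x (R y)"
proof -
  have cl: "clinear R" using assms by (simp add: positive_op_def bop_def)
  have q: "Im (cinner z (R z)) = 0" for z using assms by (simp add: positive_op_def)
  define p where "p = cinner x (R y)"
  define r where "r = cinner y (R x)"
  have "cinner (x + y) (R (x + y)) = cinner x (R x) + p + r + cinner y (R y)"
    unfolding p_def r_def by (simp add: clinear_add[OF cl] cinner_add_left cinner_add_right)
  then have 1: "Im (p + r) = 0" using q[of "x+y"] q[of x] q[of y] by simp
  have "cinner (x + scaleC \<i> y) (R (x + scaleC \<i> y)) = cinner x (R x) + \<i> * p - \<i> * r + cinner y (R y)"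
    unfolding p_def r_def
    by (simp add: clinear_add[OF cl] clinear_scaleC[OF cl] cinner_add_left cinner_add_right
        cinner_scaleC_left cinner_scaleC_right ring_distribs)
  then have 2: "Re p = Re r" using q[of "x + scaleC \<i> y"] q[of x] q[of y] by simp
  have "p = cnj r" using 1 2 by (simp add: complex_eq_iff)
  then show ?thesis unfolding p_def r_def by (metis cinner_commute)
qed

lemma grp_aux: fixes p q r s t :: "'a::ab_group_add"
  shows "p = q - r \<Longrightarrow> s - q = t \<Longrightarrow> p - s = - r - t"
  by (simp add: algebra_simps)

theorem lemma2p2:
  fixes A :: "('h::chilbert \<Rightarrow> 'h) set" and domD :: "'h set" and D :: "'h \<Rightarrow> 'h"
    and P0 R a C :: "'h \<Rightarrow> 'h"
  assumes st: "spectral_triple A domD D"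
    and ed: "essentially_discrete domD D"
    and P0: "orth_proj_onto P0 (ker_op domD D)"
    and R: "is_absDinv domD D P0 R"
    and a: "a \<in> A"
    and C: "bop C" "\<forall>x\<in>domD. C x = D (a x) - a (D x)"
  shows "\<exists>\<alpha>0 \<beta>0. bop \<alpha>0 \<and> bop \<beta>0 \<and> onorm \<alpha>0 = onorm C \<and> onorm \<beta>0 = onorm C \<and>
           (\<forall>x. P0 (a x) - a (P0 x) = P0 (\<alpha>0 (R x)) + R (\<beta>0 (P0 x)))"
proof -
  have sa: "self_adjoint_op domD D" using st by (simp add: spectral_triple_def)
  have bopa: "bop a" using st a by (simp add: spectral_triple_def star_algebra_def)
  have cla: "clinear a" using bopa bop_clinear by blast
  have adom: "a z \<in> domD" if "z \<in> domD" for z using st a that by (auto simp: spectral_triple_def)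
  have Dadd: "D (x + y) = D x + D y" if "x \<in> domD" "y \<in> domD" for x y
    using sa that by (simp add: self_adjoint_op_def)
  have DscaleC: "D (scaleC c x) = scaleC c (D x)" if "x \<in> domD" for c x
    using sa that by (simp add: self_adjoint_op_def)
  have Dsym: "cinner (D x) y = cinner x (D y)" if "x \<in> domD" "y \<in> domD" for x y
    using sa that by (simp add: self_adjoint_op_def)
  have domadd: "x + y \<in> domD" if "x \<in> domD" "y \<in> domD" for x y
    using sa that by (simp add: self_adjoint_op_def)
  have domscale: "scaleC c x \<in> domD" if "x \<in> domD" for c x
    using sa that by (simp add: self_adjoint_op_def)
  have dens: "closure domD = UNIV" using sa by (simp add: self_adjoint_op_def)
  let ?K = "ker_op domD D"
  have Ksub: "s - t \<in> ?K" if "s \<in> ?K" "t \<in> ?K" for s t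
  proof -
    have s: "s \<in> domD" "D s = 0" and t: "t \<in> domD" "D t = 0" using that by (auto simp: ker_op_def)
    have eq: "s - t = s + scaleC (-1) t" by (simp add: scaleC_minus_left scaleC_one)
    have "scaleC (-1) t \<in> domD" using domscale t(1) .
    then have "s + scaleC (-1) t \<in> domD" "D (s + scaleC (-1) t) = 0"
      using domadd[OF s(1)] Dadd[OF s(1)] DscaleC[OF t(1)] s t by auto
    then show ?thesis unfolding eq ker_op_def by simp
  qed
  have Ksub0: "\<forall>s\<in>?K. \<forall>t\<in>?K. s - t \<in> ?K" using Ksub by blast
  note Pprops = orth_proj_props[OF P0 Ksub0]
  have Pp: "oproj P0" by (rule Pprops(1))
  have clP: "clinear P0" using Pp oproj_clinear by blast
  have PK: "P0 x \<in> domD" "D (P0 x) = 0" for x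
    using P0 by (auto simp: orth_proj_onto_def ker_op_def)
  have PD: "P0 (D z) = 0" if "z \<in> domD" for z
  proof -
    have "\<forall>s\<in>?K. cinner s (D z) = 0"
    proof
      fix s assume "s \<in> ?K"
      then have "s \<in> domD" "D s = 0" by (auto simp: ker_op_def)
      then show "cinner s (D z) = 0" using Dsym[of s z] that by simp
    qed
    then show ?thesis by (rule Pprops(2))
  qed
  obtain T where T: "is_Dinv domD D P0 T" and Rpos: "positive_op R" and RT: "R \<circ> R = T \<circ> T"
    using R by (auto simp: is_absDinv_def)
  have bopT: "bop T" and TP: "\<And>x. T (P0 x) = 0" and Tdom: "\<And>y. T y \<in> domD"
    and DT: "\<And>y. D (T y) = y - P0 y" and TD: "\<And>x. x \<in> domD \<Longrightarrow> T (D x) = x - P0 x"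
    using T by (auto simp: is_Dinv_def)
  have clT: "clinear T" using bopT bop_clinear by blast
  have bopR: "bop R" using Rpos by (simp add: positive_op_def)
  have clR: "clinear R" using bopR bop_clinear by blast
  have RR: "R (R x) = T (T x)" for x using fun_cong[OF RT, of x] by simp
  have PT: "P0 (T x) = 0" for x
  proof -
    have "T (D (T x)) = T x - P0 (T x)" using TD[OF Tdom] .
    moreover have "T (D (T x)) = T x" by (simp add: DT clinear_diff[OF clT] TP)
    ultimately show ?thesis by simp
  qed
  have Tsa: "cinner (T x) y = cinner x (T y)" for x y
  proof -
    have 1: "cinner (T x) (P0 y) = 0"
      using oproj_sa[OF Pp, of "T x" y] PT[of x] by simp
    have 2: "cinner (T x) (D (T y)) = cinner x (T y)"
    proof -
      have "cinner (T x) (D (T y)) = cinner (D (T x)) (T y)" using Dsym[OF Tdom Tdom] by simp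
      also have "\<dots> = cinner x (T y) - cinner (P0 x) (T y)" by (simp add: DT cinner_diff_left)
      also have "cinner (P0 x) (T y) = 0" using oproj_sa[OF Pp, of x "T y"] PT[of y] by simp
      finally show ?thesis by simp
    qed
    have "y = P0 y + D (T y)" by (simp add: DT)
    then have "cinner (T x) y = cinner (T x) (P0 y + D (T y))" by (rule arg_cong)
    then have "cinner (T x) y = cinner (T x) (P0 y) + cinner (T x) (D (T y))"
      by (simp only: cinner_add_right)
    then show ?thesis using 1 2 by simp
  qed
  have Rsa: "cinner (R x) y = cinner x (R y)" for x y using positive_sa[OF Rpos] .
  have nRT: "norm (R x) = norm (T x)" for x
  proof -
    have "cinner (R x) (R x) = cinner (T x) (T x)"
      using Rsa[of x "R x"] Tsa[of x "T x"] RR[of x] by simp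
    then have "complex_of_real ((norm (R x))^2) = complex_of_real ((norm (T x))^2)"
      by (simp only: cinner_self)
    then have "(norm (R x))^2 = (norm (T x))^2" by (simp only: of_real_eq_iff)
    then show ?thesis by (simp add: power2_eq_iff_nonneg)
  qed
  have RP: "R (P0 x) = 0" for x using nRT[of "P0 x"] TP by simp
  have PR: "P0 (R x) = 0" for x
  proof -
    have "\<forall>s\<in>?K. cinner s (R x) = 0"
    proof
      fix s assume "s \<in> ?K"
      then have "P0 s = s" by (rule Pprops(3))
      then have "R s = 0" using RP[of s] by simp
      then show "cinner s (R x) = 0" using Rsa[of s x] by simp
    qed
    then show ?thesis by (rule Pprops(2))
  qed
  have denseT: "y - P0 y \<in> closure (range T)" for y
  proof -
    have "y \<in> closure domD" using dens by simp
    then obtain z where z: "\<forall>n. z n \<in> domD" "z \<longlonglongrightarrow> y" unfolding closure_sequential by blast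
    have "(\<lambda>n. z n - P0 (z n)) \<longlonglongrightarrow> y - P0 y"
      by (intro tendsto_diff z(2) bop_tendsto[OF oproj_bop[OF Pp]])
    moreover have "\<forall>n. (\<lambda>n. z n - P0 (z n)) n \<in> range T"
    proof
      fix n
      have "z n - P0 (z n) = T (D (z n))" using TD[of "z n"] z(1) by simp
      then show "(\<lambda>n. z n - P0 (z n)) n \<in> range T" by simp
    qed
    ultimately have "\<exists>x. (\<forall>n. x n \<in> range T) \<and> x \<longlonglongrightarrow> y - P0 y" by (intro exI conjI)
    then show ?thesis unfolding closure_sequential .
  qed
  obtain U where U: "bop U" "\<forall>y. norm (U y) \<le> norm y" "\<forall>x. U (T x) = R x" "\<forall>y. U (P0 y) = 0"
      "\<forall>y. P0 (U y) = 0"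
    using extend[OF Pp bopT bopR nRT[symmetric] PT PR denseT] by blast
  have clU: "clinear U" using U(1) bop_clinear by blast
  have RU: "R (U y) = T y" for y
  proof -
    have "closure (range T) \<subseteq> {w. R (U w) = T w}"
    proof (rule closure_minimal)
      show "range T \<subseteq> {w. R (U w) = T w}" using U(3) RR by auto
      show "closed {w. R (U w) = T w}"
        by (intro closed_Collect_eq continuous_on_compose2[OF bop_cont[OF bopR] bop_cont[OF U(1)]]
            bop_cont[OF bopT]) auto
    qed
    then have "R (U (y - P0 y)) = T (y - P0 y)" using denseT[of y] by blast
    then show ?thesis using U(4) TP by (simp add: clinear_diff[OF clU] clinear_diff[OF clT])
  qed
  have denseR: "y - P0 y \<in> closure (range R)" for y
  proof -
    have "range T \<subseteq> range R"
    proof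
      fix w assume "w \<in> range T"
      then obtain x where "w = T x" by blast
      then have "w = R (U x)" using RU[of x] by simp
      then show "w \<in> range R" by simp
    qed
    from closure_mono[OF this] show ?thesis using denseT[of y] by blast
  qed
  obtain V where V: "bop V" "\<forall>y. norm (V y) \<le> norm y" "\<forall>x. V (R x) = T x" "\<forall>y. V (P0 y) = 0"
      "\<forall>y. P0 (V y) = 0"
    using extend[OF Pp bopR bopT nRT PR PT denseR] by blast
  have CD: "C z = D (a z) - a (D z)" if "z \<in> domD" for z using C(2) that by blast
  have key: "P0 (a x) - a (P0 x) = - P0 (C (T x)) - T (C (P0 x))" for x
  proof -
    have xdec: "x = P0 x + D (T x)" by (simp add: DT)
    have "a x = a (P0 x + D (T x))" using xdec by (rule arg_cong)
    then have ax: "a x = a (P0 x) + a (D (T x))" by (simp only: clinear_add[OF cla])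
    have 1: "a (D (T x)) = D (a (T x)) - C (T x)" using CD[OF Tdom[of x]] by simp
    have 2: "P0 (a x) = P0 (a (P0 x)) - P0 (C (T x))"
      using ax 1 PD[OF adom[OF Tdom[of x]]] by (simp add: clinear_add[OF clP] clinear_diff[OF clP])
    have 3: "D (a (P0 x)) = C (P0 x)" using CD[OF PK(1)[of x]] PK(2)[of x] clinear_zero[OF cla] by simp
    have 4: "a (P0 x) - P0 (a (P0 x)) = T (C (P0 x))" using TD[OF adom[OF PK(1)[of x]]] 3 by simp
    show ?thesis by (rule grp_aux[OF 2 4])
  qed
  have c0: "onorm C \<ge> 0" using onorm_pos_le[OF bop_bounded_linear[OF C(1)]] .
  show ?thesis
  proof (cases "\<forall>y. P0 y = 0")
    case True
    then show ?thesis using bopR clinear_zero[OF cla] clinear_zero[OF clR] clinear_zero[OF bop_clinear[OF C(1)]]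
      by (intro exI[of _ C] conjI C(1)) auto
  next
    case False
    then obtain y1 where y1: "P0 y1 \<noteq> 0" by blast
    show ?thesis
    proof (cases "\<forall>y. P0 y = y")
      case True
      have "R x = 0" for x using RP[of x] True by simp
      then show ?thesis using True clinear_zero[OF bop_clinear[OF C(1)]] clinear_zero[OF clP]
        by (intro exI[of _ C] conjI C(1)) auto
    next
      case False
      then obtain y2 where y2: "P0 y2 \<noteq> y2" by blast
      define e where "e = scaleC (complex_of_real (1 / norm (P0 y1))) (P0 y1)"
      define f where "f = scaleC (complex_of_real (1 / norm (y2 - P0 y2))) (y2 - P0 y2)"
      have ne1: "norm e = 1"
      proof -
        have "norm e = cmod (complex_of_real (1 / norm (P0 y1))) * norm (P0 y1)"
          unfolding e_def by (rule norm_scaleC)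
        also have "\<dots> = \<bar>1 / norm (P0 y1)\<bar> * norm (P0 y1)" by (simp only: norm_of_real)
        also have "\<dots> = 1" using y1 by simp
        finally show ?thesis .
      qed
      have e: "P0 e = e" "norm e = 1" using ne1 unfolding e_def
        by (simp_all only: clinear_scaleC[OF clP] oproj_idem[OF Pp])
      have Qd: "P0 (y2 - P0 y2) = 0" by (simp add: clinear_diff[OF clP] oproj_idem[OF Pp])
      have nf1: "norm f = 1"
      proof -
        have "y2 - P0 y2 \<noteq> 0" using y2 by simp
        have "norm f = cmod (complex_of_real (1 / norm (y2 - P0 y2))) * norm (y2 - P0 y2)"
          unfolding f_def by (rule norm_scaleC)
        also have "\<dots> = \<bar>1 / norm (y2 - P0 y2)\<bar> * norm (y2 - P0 y2)" by (simp only: norm_of_real)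
        also have "\<dots> = 1" using \<open>y2 - P0 y2 \<noteq> 0\<close> by simp
        finally show ?thesis .
      qed
      have f: "P0 f = 0" "norm f = 1" using nf1 Qd unfolding f_def
        by (simp_all only: clinear_scaleC[OF clP] scaleC_zero_right)
      define X1 where "X1 = (\<lambda>y. - P0 (C (V y)))"
      define X2 where "X2 = (\<lambda>y. - U (C (P0 y)))"
      have bX1: "bop X1" unfolding X1_def
        by (rule bop_uminus, rule bop_comp[OF oproj_bop[OF Pp]], rule bop_comp[OF C(1) V(1)])
      have bX2: "bop X2" unfolding X2_def
        by (rule bop_uminus, rule bop_comp[OF U(1)], rule bop_comp[OF C(1) oproj_bop[OF Pp]])
      have nX1: "norm (X1 y) \<le> onorm C * norm y" for y
      proof -
        have "norm (X1 y) \<le> norm (C (V y))" unfolding X1_def using oproj_norm_le(1)[OF Pp] by simp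
        also have "\<dots> \<le> onorm C * norm (V y)" by (rule bop_onorm[OF C(1)])
        also have "\<dots> \<le> onorm C * norm y" using V(2) c0 by (simp add: mult_left_mono)
        finally show ?thesis .
      qed
      have nX2: "norm (X2 y) \<le> onorm C * norm y" for y
      proof -
        have "norm (X2 y) \<le> norm (C (P0 y))" unfolding X2_def using U(2) by simp
        also have "\<dots> \<le> onorm C * norm (P0 y)" by (rule bop_onorm[OF C(1)])
        also have "\<dots> \<le> onorm C * norm y" using oproj_norm_le(1)[OF Pp] c0 by (simp add: mult_left_mono)
        finally show ?thesis .
      qed
      have Q2: "oproj (\<lambda>x. x - P0 x)" by (rule oproj_comp[OF Pp])
      have QX1: "P0 (X1 y) = X1 y" for y
        by (simp add: X1_def clinear_minus[OF clP] oproj_idem[OF Pp])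
      have X1Q: "X1 (P0 y) = 0" for y
        using V(4) by (simp add: X1_def clinear_zero[OF bop_clinear[OF C(1)]] clinear_zero[OF clP])
      have QX2: "X2 y - P0 (X2 y) = X2 y" for y
        using U(5) by (simp add: X2_def clinear_minus[OF clP])
      have X2Q: "X2 (y - P0 y) = 0" for y
        using U(4) by (simp add: X2_def clinear_diff[OF clP] oproj_idem[OF Pp]
            clinear_zero[OF bop_clinear[OF C(1)]] clinear_zero[OF clU])
      have f2: "f - P0 f = f" "norm f = 1" using f by simp_all
      have e2: "e - P0 e = 0" "norm e = 1" using e by simp_all
      define \<alpha> where "\<alpha> = (\<lambda>y. X1 y + scaleC (complex_of_real (onorm C) * cinner e y) f)"
      define \<beta> where "\<beta> = (\<lambda>y. X2 y + scaleC (complex_of_real (onorm C) * cinner f y) e)"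
      have A: "bop \<alpha>" "onorm \<alpha> = onorm C"
        unfolding \<alpha>_def using block[OF Pp bX1 nX1 c0 QX1 X1Q e f] by blast+
      have B: "bop \<beta>" "onorm \<beta> = onorm C"
        unfolding \<beta>_def using block[OF Q2 bX2 nX2 c0 QX2 X2Q f2 e2] by blast+
      have Re: "R e = 0" using RP[of e] e(1) by simp
      have "P0 (a x) - a (P0 x) = P0 (\<alpha> (R x)) + R (\<beta> (P0 x))" for x
      proof -
        have 1: "P0 (\<alpha> (R x)) = - P0 (C (T x))"
        proof -
          have "P0 (\<alpha> (R x)) = P0 (X1 (R x)) + scaleC (complex_of_real (onorm C) * cinner e (R x)) (P0 f)"
            unfolding \<alpha>_def by (simp only: clinear_add[OF clP] clinear_scaleC[OF clP])
          also have "\<dots> = X1 (R x)" using QX1[of "R x"] f(1) by simp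
          also have "\<dots> = - P0 (C (T x))" using V(3) by (simp add: X1_def)
          finally show ?thesis .
        qed
        have 2: "R (\<beta> (P0 x)) = - T (C (P0 x))"
        proof -
          have "R (\<beta> (P0 x)) = R (X2 (P0 x)) + scaleC (complex_of_real (onorm C) * cinner f (P0 x)) (R e)"
            unfolding \<beta>_def by (simp only: clinear_add[OF clR] clinear_scaleC[OF clR])
          also have "\<dots> = R (X2 (P0 x))" using Re by simp
          also have "\<dots> = - T (C (P0 x))" using RU
            by (simp add: X2_def clinear_minus[OF clR] oproj_idem[OF Pp])
          finally show ?thesis .
        qed
        show ?thesis using key[of x] 1 2 by simp
      qed
      then show ?thesis using A B by blast
    qed
  qed
qed

end
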